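(* Let $g$ be a generator satisfying (H1a) ${\rm d}P\times{\rm d}t$-a.e., for each $(y_0,z_0)\in\mathbb{R}^{1+d}$, $\lim_{(y,z)\to(y_0^-,z_0)}g(\omega,t,y,z)=g(\omega,t,y_0,z_0)$ and $\liminf_{(y,z)\to(y_0^+,z_0)}g(\omega,t,y,z)\ge g(\omega,t,y_0,z_0)$; and (H5) there are constants $C>0$, $\alpha\in(0,1)$ and a nonnegative progressively measurable process $(f_t)\in L^1([0,T]\times\Omega)$ such that ${\rm d}P\times{\rm d}t$-a.e., $|g(\omega,t,y,z)|\le f_t(\omega)+C(|y|+|z|^\alpha)$ for all $(y,z)$. For $n\ge1$ define $g_n(\omega,t,y,z):=\inf_{(u,v)\in\mathbb{Q}^{1+d}}\{g(\omega,t,u,v)+nC(|y-u|+|z-v|^\alpha)\}$, with $C,\alpha$ from (H5). Then: (i) for each $n\ge1$, $g_n$ maps $\Omega\times[0,T]\times\mathbb{R}\times\mathbb{R}^d$ into $\mathbb{R}$, and for each $(y,z)$, $g_n(\cdot,\cdot,y,z)$ is $(\mathcal{F}_t)$-progressively measurable; (ii) for each $n\ge1$ and each $(y,z)$, ${\rm d}P\times{\rm d}t$-a.e., $g_n(\omega,t,y,z)\le g_{n+1}(\omega,t,y,z)\le g(\omega,t,y,z)$ and $|g_n(\omega,t,y,z)|\le f_t(\omega)+C(|y|+|z|^\alpha)$; (iii) for each $y_1,y_2,z_1,z_2$, ${\rm d}P\times{\rm d}t$-a.e., $|g_n(\omega,t,y_1,z_1)-g_n(\omega,t,y_2,z_2)|\le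 nC(|y_1-y_2|+|z_1-z_2|^\alpha)$; (iv) if $(y_n,z_n)\to(y_0^-,z_0)$ as $n\to\infty$, then $\lim_{n\to\infty}g_n(\omega,t,y_n,z_n)=g(\omega,t,y_0,z_0)$ ${\rm d}P\times{\rm d}t$-a.e.
   Context: $T>0$, $d\ge1$; $(\Omega,\mathcal{F},P)$ complete probability space with standard $d$-dimensional Brownian motion and augmented natural filtration $(\mathcal{F}_t)$. A generator is a map $g:\Omega\times[0,T]\times\mathbb{R}\times\mathbb{R}^d\to\mathbb{R}$, $(\mathcal{F}_t)$-progressively measurable for each $(y,z)$. The notation $(y,z)\to(y_0^-,z_0)$ (resp. $(y_0^+,z_0)$) means $y\to y_0$ with $y<y_0$ (resp. $y>y_0$) and $z\to z_0$. *)

theory Defs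
  imports "HOL-Probability.Probability"
begin

definition filtration_on :: "'a measure \<Rightarrow> real \<Rightarrow> (real \<Rightarrow> 'a measure) \<Rightarrow> bool" where
  "filtration_on M T F \<longleftrightarrow>
     (\<forall>t\<in>{0..T}. space (F t) = space M \<and> sets (F t) \<subseteq> sets M) \<and>
     (\<forall>s t. 0 \<le> s \<longrightarrow> s \<le> t \<longrightarrow> t \<le> T \<longrightarrow> sets (F s) \<subseteq> sets (F t))"

definition complete_space_measure :: "'a measure \<Rightarrow> bool" where
  "complete_space_measure M \<longleftrightarrow>
     (\<forall>A B. B \<in> sets M \<longrightarrow> emeasure M B = 0 \<longrightarrow> A \<subseteq> B \<longrightarrow> A \<in> sets M)"

definition time_interval :: "real \<Rightarrow> real measure" where
  "time_interval T = restrict_space lborel {0..T}"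

definition progressive ::
  "real \<Rightarrow> (real \<Rightarrow> 'a measure) \<Rightarrow> ('a \<Rightarrow> real \<Rightarrow> 'b::topological_space) \<Rightarrow> bool" where
  "progressive T F X \<longleftrightarrow>
     (\<forall>t\<in>{0..T}. (\<lambda>(\<omega>, s). X \<omega> s) \<in> borel_measurable (F t \<Otimes>\<^sub>M restrict_space lborel {0..t}))"

definition gen_approx ::
  "real \<Rightarrow> real \<Rightarrow> ('a \<Rightarrow> real \<Rightarrow> real \<Rightarrow> real ^ 'd \<Rightarrow> real) \<Rightarrow> nat
     \<Rightarrow> 'a \<Rightarrow> real \<Rightarrow> real \<Rightarrow> real ^ 'd \<Rightarrow> ereal" where
  "gen_approx C \<alpha> g n \<omega> t y z =
     (INF uv \<in> {(u, v). u \<in> \<rat> \<and> (\<forall>i. v $ i \<in> \<rat>)}.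
        ereal (g \<omega> t (fst uv) (snd uv)
               + real n * C * (\<bar>y - fst uv\<bar> + norm (z - snd uv) powr \<alpha>)))"

end

theory Submission
  imports Defs
begin

lemma powr_subadd:
  fixes a b \<alpha> :: real
  assumes "0 \<le> a" "0 \<le> b" "0 < \<alpha>" "\<alpha> \<le> 1"
  shows "(a + b) powr \<alpha> \<le> a powr \<alpha> + b powr \<alpha>"
proof (cases "a + b = 0")
  case True then show ?thesis using assms by simp
next
  case False
  hence s: "a + b > 0" using assms by simp
  have k: "x \<le> x powr \<alpha>" if "0 \<le> x" "x \<le> 1" for x :: real
    using powr_mono'[of \<alpha> 1 x] that assms by simp
  have "a powr \<alpha> = (a + b) powr \<alpha> * (a / (a+b)) powr \<alpha>"
    using s assms by (simp add: powr_divide)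
  moreover have "b powr \<alpha> = (a + b) powr \<alpha> * (b / (a+b)) powr \<alpha>"
    using s assms by (simp add: powr_divide)
  moreover have "a / (a+b) \<le> (a / (a+b)) powr \<alpha>" using k assms s by simp
  moreover have "b / (a+b) \<le> (b / (a+b)) powr \<alpha>" using k assms s by simp
  moreover have "(a+b) powr \<alpha> = (a + b) powr \<alpha> * (a / (a+b)) + (a + b) powr \<alpha> * (b / (a+b))"
  proof -
    have "a / (a+b) + b / (a+b) = 1" using s by (simp add: add_divide_distrib[symmetric])
    thus ?thesis by (metis distrib_left mult.right_neutral)
  qed
  moreover have "(a+b) powr \<alpha> \<ge> 0" by simp
  ultimately show ?thesis
    by (smt (verit) mult_left_mono)
qed

lemma norm_powr_tri:
  fixes x y :: "'a::real_normed_vector" and \<alpha> :: real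
  assumes "0 < \<alpha>" "\<alpha> \<le> 1"
  shows "norm (x - z) powr \<alpha> \<le> norm (x - y) powr \<alpha> + norm (y - z) powr \<alpha>"
proof -
  have "norm (x - z) powr \<alpha> \<le> (norm (x - y) + norm (y - z)) powr \<alpha>"
    using assms by (intro powr_mono2) (auto intro: norm_diff_triangle_le)
  also have "\<dots> \<le> norm (x - y) powr \<alpha> + norm (y - z) powr \<alpha>"
    using assms by (intro powr_subadd) auto
  finally show ?thesis .
qed

definition Qset :: "(real \<times> (real ^ 'd)) set" where
  "Qset = {(u, v). u \<in> \<rat> \<and> (\<forall>i. v $ i \<in> \<rat>)}"

lemma countable_Qset: "countable (Qset :: (real \<times> (real ^ 'd)) set)"
proof -
  let ?h = "\<lambda>(q :: rat, w :: rat ^ 'd). (of_rat q :: real, \<chi> i. (of_rat (w $ i) :: real))"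
  have "Qset \<subseteq> range ?h"
  proof
    fix x assume "x \<in> (Qset :: (real \<times> (real ^ 'd)) set)"
    then obtain u v where x: "x = (u, v)" "u \<in> \<rat>" "\<And>i. v $ i \<in> \<rat>" by (auto simp: Qset_def)
    obtain q where q: "u = of_rat q" using x(2) Rats_cases by metis
    have "\<forall>i. \<exists>r. v $ i = of_rat r" using x(3) Rats_cases by metis
    then obtain w where w: "\<And>i. v $ i = of_rat (w i)" by metis
    have "x = ?h (q, \<chi> i. w i)" using x q w by (simp add: vec_eq_iff)
    thus "x \<in> range ?h" by blast
  qed
  thus ?thesis by (rule countable_subset) simp
qed

lemma Qset_approx:
  fixes y :: real and z :: "real ^ 'd" and e :: real
  assumes "e > 0"
  shows "\<exists>u v. (u, v) \<in> Qset \<and> u < y \<and> y - e < u \<and> norm (z - v) < e"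
proof -
  obtain u where u: "u \<in> \<rat>" "y - e < u" "u < y" using Rats_dense_in_real[of "y - e" y] assms by auto
  define e' where "e' = e / real CARD('d)"
  have e': "e' > 0" using assms by (simp add: e'_def)
  have "\<forall>i. \<exists>r\<in>\<rat>. z $ i - e' < r \<and> r < z $ i" proof
    fix i show "\<exists>r\<in>\<rat>. z $ i - e' < r \<and> r < z $ i"
      using Rats_dense_in_real[of "z $ i - e'" "z $ i"] e' by simp
  qed
  then obtain w where w: "\<And>i. w i \<in> \<rat>" "\<And>i. z $ i - e' < w i" "\<And>i. w i < z $ i" by metis
  define v where "v = (\<chi> i. w i)"
  have "norm (z - v) \<le> (\<Sum>i\<in>UNIV. \<bar>(z - v) $ i\<bar>)" by (rule norm_le_l1_cart)
  also have "\<dots> < (\<Sum>i\<in>(UNIV::'d set). e')"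
    proof (intro sum_strict_mono)
    fix i :: 'd
    have "z $ i - e' < w i" "w i < z $ i" using w by auto
    thus "\<bar>(z - v) $ i\<bar> < e'" using e' by (simp add: v_def abs_less_iff)
  qed auto
  also have "\<dots> = e" by (simp add: e'_def)
  finally have "norm (z - v) < e" .
  moreover have "(u, v) \<in> Qset" using u w by (simp add: Qset_def v_def)
  ultimately show ?thesis using u by blast
qed

definition ga :: "real \<Rightarrow> real \<Rightarrow> (real \<Rightarrow> real ^ 'd \<Rightarrow> real) \<Rightarrow> nat \<Rightarrow> real \<Rightarrow> real ^ 'd \<Rightarrow> ereal" where
  "ga C \<alpha> G n y z = (INF uv \<in> Qset. ereal (G (fst uv) (snd uv)
               + real n * C * (\<bar>y - fst uv\<bar> + norm (z - snd uv) powr \<alpha>)))"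

lemma ga_le:
  "(u, v) \<in> Qset \<Longrightarrow> ga C \<alpha> G n y z \<le> ereal (G u v + real n * C * (\<bar>y - u\<bar> + norm (z - v) powr \<alpha>))"
  unfolding ga_def by (rule INF_lower2) auto

lemma ga_upper:
  fixes G :: "real \<Rightarrow> real ^ 'd \<Rightarrow> real"
  assumes LC: "((\<lambda>(y, z). G y z) \<longlongrightarrow> G y z) (at (y, z) within {..<y} \<times> UNIV)"
    and \<alpha>: "0 < \<alpha>"
  shows "ga C \<alpha> G n y z \<le> ereal (G y z)"
proof -
  have "\<forall>k::nat. \<exists>u v. (u, v) \<in> Qset \<and> u < y \<and> y - 1/(Suc k) < u \<and> norm (z - v) < 1/(Suc k)"
    by (intro allI Qset_approx) simp
  then obtain uu vv where uv: "\<And>k. (uu k, vv k) \<in> Qset" "\<And>k. uu k < y"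
    "\<And>k. y - 1/(Suc k) < uu k" "\<And>k. norm (z - vv k) < 1/(Suc k)" by metis
  have d0: "(\<lambda>k. 1 / real (Suc k)) \<longlonglongrightarrow> 0" by (rule LIMSEQ_inverse_real_of_nat[unfolded inverse_eq_divide])
  have a1: "(\<lambda>k. \<bar>y - uu k\<bar>) \<longlonglongrightarrow> 0"
  proof (rule tendsto_sandwich[OF _ _ tendsto_const d0])
    show "\<forall>\<^sub>F k in sequentially. 0 \<le> \<bar>y - uu k\<bar>" by simp
    show "\<forall>\<^sub>F k in sequentially. \<bar>y - uu k\<bar> \<le> 1 / real (Suc k)"
      using uv(2,3) by (intro always_eventually allI) (smt (verit))
  qed
  have a2: "(\<lambda>k. norm (z - vv k)) \<longlonglongrightarrow> 0"
  proof (rule tendsto_sandwich[OF _ _ tendsto_const d0])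
    show "\<forall>\<^sub>F k in sequentially. 0 \<le> norm (z - vv k)" by simp
    show "\<forall>\<^sub>F k in sequentially. norm (z - vv k) \<le> 1 / real (Suc k)"
      using uv(4) by (intro always_eventually allI less_imp_le)
  qed
  have "(\<lambda>k. y - uu k) \<longlonglongrightarrow> 0" using a1 tendsto_rabs_zero_iff by blast
  from tendsto_diff[OF tendsto_const[of y] this] have uy: "uu \<longlonglongrightarrow> y" by simp
  have "(\<lambda>k. z - vv k) \<longlonglongrightarrow> 0" using a2 tendsto_norm_zero_iff by blast
  from tendsto_diff[OF tendsto_const[of z] this] have vz: "vv \<longlonglongrightarrow> z" by simp
  have "filterlim (\<lambda>k. (uu k, vv k)) (at (y, z) within {..<y} \<times> UNIV) sequentially"
    unfolding filterlim_at using uv(2) by (auto intro!: tendsto_Pair uy vz always_eventually simp: less_imp_neq)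
  from filterlim_compose[OF LC this] have gk: "(\<lambda>k. G (uu k) (vv k)) \<longlonglongrightarrow> G y z"
    by simp
  have pw: "(\<lambda>k. norm (z - vv k) powr \<alpha>) \<longlonglongrightarrow> 0"
    by (rule tendsto_zero_powrI[OF a2 tendsto_const]) (use \<alpha> in auto)
  have "(\<lambda>k. G (uu k) (vv k) + real n * C * (\<bar>y - uu k\<bar> + norm (z - vv k) powr \<alpha>))
      \<longlonglongrightarrow> G y z + real n * C * (0 + 0)"
    by (intro tendsto_intros gk a1 pw)
  hence "(\<lambda>k. ereal (G (uu k) (vv k) + real n * C * (\<bar>y - uu k\<bar> + norm (z - vv k) powr \<alpha>)))
      \<longlonglongrightarrow> ereal (G y z)"
    by (simp add: tendsto_ereal)
  thus ?thesis
    by (rule LIMSEQ_le_const) (use ga_le[OF uv(1)] in blast)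
qed


lemma zero_Qset: "(0, 0) \<in> Qset"
  by (simp add: Qset_def)

lemma ga_not_inf: "ga C \<alpha> G n y z \<noteq> \<infinity>"
  using ga_le[OF zero_Qset, of C \<alpha> G n y z] by auto

lemma term_lb:
  fixes G :: "real \<Rightarrow> real ^ 'd \<Rightarrow> real"
  assumes B: "\<bar>G u v\<bar> \<le> \<phi> + C * (\<bar>u\<bar> + norm v powr \<alpha>)"
    and C: "C > 0" and \<alpha>: "0 < \<alpha>" "\<alpha> \<le> 1"
  shows "G u v + real n * C * (\<bar>y - u\<bar> + norm (z - v) powr \<alpha>)
     \<ge> -(\<phi> + C * (\<bar>y\<bar> + norm z powr \<alpha>)) + (real n - 1) * C * (\<bar>y - u\<bar> + norm (z - v) powr \<alpha>)"
proof -
  have "norm (v - 0) powr \<alpha> \<le> norm (v - z) powr \<alpha> + norm (z - 0) powr \<alpha>"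
    by (rule norm_powr_tri[OF \<alpha>])
  hence 1: "norm v powr \<alpha> \<le> norm z powr \<alpha> + norm (z - v) powr \<alpha>"
    by (simp add: norm_minus_commute)
  have 2: "\<bar>u\<bar> \<le> \<bar>y\<bar> + \<bar>y - u\<bar>" by simp
  have "C * (\<bar>u\<bar> + norm v powr \<alpha>) \<le> C * (\<bar>y\<bar> + norm z powr \<alpha> + (\<bar>y - u\<bar> + norm (z - v) powr \<alpha>))"
    using 1 2 C by (intro mult_left_mono) auto
  thus ?thesis using B by (simp add: algebra_simps)
qed

lemma ga_lower:
  fixes G :: "real \<Rightarrow> real ^ 'd \<Rightarrow> real"
  assumes B: "\<And>u v. \<bar>G u v\<bar> \<le> \<phi> + C * (\<bar>u\<bar> + norm v powr \<alpha>)"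
    and C: "C > 0" and \<alpha>: "0 < \<alpha>" "\<alpha> \<le> 1" and n: "n \<ge> 1"
  shows "ereal (-(\<phi> + C * (\<bar>y\<bar> + norm z powr \<alpha>))) \<le> ga C \<alpha> G n y z"
  unfolding ga_def
proof (rule INF_greatest)
  fix uv :: "real \<times> (real ^ 'd)" assume "uv \<in> Qset"
  obtain u v where uv: "uv = (u, v)" by fastforce
  have "0 \<le> (real n - 1) * C * (\<bar>y - u\<bar> + norm (z - v) powr \<alpha>)"
    using n C by simp
  thus "ereal (-(\<phi> + C * (\<bar>y\<bar> + norm z powr \<alpha>)))
     \<le> ereal (G (fst uv) (snd uv) + real n * C * (\<bar>y - fst uv\<bar> + norm (z - snd uv) powr \<alpha>))"
    using term_lb[where G=G and u=u and v=v and n=n and y=y and z=z, OF B[of u v] C \<alpha>] uv by simp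
qed

lemma ga_mono:
  fixes G :: "real \<Rightarrow> real ^ 'd \<Rightarrow> real" and z :: "real ^ 'd"
  assumes C: "C > 0"
  shows "ga C \<alpha> G n y z \<le> ga C \<alpha> G (Suc n) y z"
  unfolding ga_def
proof (rule INF_mono)
  fix uv :: "real \<times> (real ^ 'd)" assume "uv \<in> Qset"
  have "real n * C * (\<bar>y - fst uv\<bar> + norm (z - snd uv) powr \<alpha>)
     \<le> real (Suc n) * C * (\<bar>y - fst uv\<bar> + norm (z - snd uv) powr \<alpha>)"
    using C by (intro mult_right_mono) auto
  thus "\<exists>m\<in>Qset. ereal (G (fst m) (snd m) + real n * C * (\<bar>y - fst m\<bar> + norm (z - snd m) powr \<alpha>))
     \<le> ereal (G (fst uv) (snd uv) + real (Suc n) * C * (\<bar>y - fst uv\<bar> + norm (z - snd uv) powr \<alpha>))"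
    using \<open>uv \<in> Qset\<close> by force
qed

lemma ga_lip_half:
  fixes G :: "real \<Rightarrow> real ^ 'd \<Rightarrow> real"
  assumes C: "C > 0" and \<alpha>: "0 < \<alpha>" "\<alpha> \<le> 1"
    and f1: "ga C \<alpha> G n y1 z1 = ereal r1" and f2: "ga C \<alpha> G n y2 z2 = ereal r2"
  shows "r1 - r2 \<le> real n * C * (\<bar>y1 - y2\<bar> + norm (z1 - z2) powr \<alpha>)"
proof -
  let ?L = "real n * C * (\<bar>y1 - y2\<bar> + norm (z1 - z2) powr \<alpha>)"
  have "ereal (r1 - ?L) \<le> ga C \<alpha> G n y2 z2"
    unfolding ga_def
  proof (rule INF_greatest)
    fix uv :: "real \<times> (real ^ 'd)" assume uv: "uv \<in> Qset"
    obtain u v where uvd: "uv = (u, v)" by fastforce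
    have "ereal r1 \<le> ereal (G u v + real n * C * (\<bar>y1 - u\<bar> + norm (z1 - v) powr \<alpha>))"
      using ga_le[of u v C \<alpha> G n y1 z1] uv uvd f1 by simp
    hence a: "r1 \<le> G u v + real n * C * (\<bar>y1 - u\<bar> + norm (z1 - v) powr \<alpha>)" by simp
    have t: "norm (z1 - v) powr \<alpha> \<le> norm (z1 - z2) powr \<alpha> + norm (z2 - v) powr \<alpha>"
      by (rule norm_powr_tri[OF \<alpha>])
    have "real n * C * (\<bar>y1 - u\<bar> + norm (z1 - v) powr \<alpha>)
        \<le> real n * C * ((\<bar>y1 - y2\<bar> + norm (z1 - z2) powr \<alpha>) + (\<bar>y2 - u\<bar> + norm (z2 - v) powr \<alpha>))"
      using t C by (intro mult_left_mono) auto
    with a show "ereal (r1 - ?L) \<le> ereal (G (fst uv) (snd uv) + real n * C * (\<bar>y2 - fst uv\<bar> + norm (z2 - snd uv) powr \<alpha>))"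
      using uvd by (simp add: algebra_simps)
  qed
  thus ?thesis using f2 by simp
qed


lemma dist_pair_le: "dist (u, v) (y, z) \<le> \<bar>u - y\<bar> + norm (v - z)"
proof -
  have "dist (u, v) (y, z) = sqrt ((dist u y)\<^sup>2 + (dist v z)\<^sup>2)" by (rule dist_Pair_Pair)
  also have "\<dots> \<le> \<bar>dist u y\<bar> + \<bar>dist v z\<bar>" by (rule sqrt_sum_squares_le_sum_abs)
  finally show ?thesis by (simp add: dist_real_def dist_norm)
qed

lemma lsc:
  fixes G :: "real \<Rightarrow> real ^ 'd \<Rightarrow> real"
  assumes LC: "\<And>y0 z0. ((\<lambda>(y, z). G y z) \<longlongrightarrow> G y0 z0) (at (y0, z0) within {..<y0} \<times> UNIV)"
    and RL: "Liminf (at (y0, z0) within {y0<..} \<times> UNIV) (\<lambda>(y, z). ereal (G y z)) \<ge> ereal (G y0 z0)"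
    and e: "e > 0"
  shows "\<exists>\<delta>>0. \<forall>u v. \<bar>u - y0\<bar> < \<delta> \<and> norm (v - z0) < \<delta> \<longrightarrow> G y0 z0 - e < G u v"
proof -
  have "\<forall>\<^sub>F x in at (y0, z0) within {..<y0} \<times> UNIV. dist ((\<lambda>(y, z). G y z) x) (G y0 z0) < e/2"
    using LC[of y0 z0] e unfolding tendsto_iff by (meson half_gt_zero)
  then obtain d1 where d1: "d1 > 0" "\<And>x. x \<in> {..<y0} \<times> UNIV \<Longrightarrow> x \<noteq> (y0, z0) \<Longrightarrow> dist x (y0, z0) < d1
      \<Longrightarrow> dist ((\<lambda>(y, z). G y z) x) (G y0 z0) < e/2"
    unfolding eventually_at by blast
  have "ereal (G y0 z0 - e) < ereal (G y0 z0)" using e by simp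
  with RL have "\<forall>\<^sub>F x in at (y0, z0) within {y0<..} \<times> UNIV. ereal (G y0 z0 - e) < (\<lambda>(y, z). ereal (G y z)) x"
    unfolding le_Liminf_iff by blast
  then obtain d2 where d2: "d2 > 0" "\<And>x. x \<in> {y0<..} \<times> UNIV \<Longrightarrow> x \<noteq> (y0, z0) \<Longrightarrow> dist x (y0, z0) < d2
      \<Longrightarrow> ereal (G y0 z0 - e) < (\<lambda>(y, z). ereal (G y z)) x"
    unfolding eventually_at by blast
  define \<delta> where "\<delta> = min d1 d2 / 2"
  have \<delta>: "\<delta> > 0" using d1 d2 by (simp add: \<delta>_def)
  have left: "\<bar>G u v - G y0 z0\<bar> < e/2" if "u < y0" "\<bar>u - y0\<bar> < \<delta>" "norm (v - z0) < \<delta>" for u v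
  proof -
    have "dist (u, v) (y0, z0) < d1" using dist_pair_le[of u v y0 z0] that \<delta>_def by linarith
    with d1(2)[of "(u, v)"] that show ?thesis by (simp add: dist_real_def)
  qed
  have "G y0 z0 - e < G u v" if "\<bar>u - y0\<bar> < \<delta>" "norm (v - z0) < \<delta>" for u v
  proof (cases u y0 rule: linorder_cases)
    case less then show ?thesis using left[OF less that] by linarith
  next
    case greater
    have "dist (u, v) (y0, z0) < d2" using dist_pair_le[of u v y0 z0] that \<delta>_def by linarith
    with d2(2)[of "(u, v)"] greater show ?thesis by simp
  next
    case equal
    have "filterlim (\<lambda>w. (w, v)) (at (y0, v) within {..<y0} \<times> UNIV) (at_left y0)"
      unfolding filterlim_at
      by (auto intro!: tendsto_eq_intros simp: eventually_at_filter)
    from filterlim_compose[OF LC[of y0 v] this]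
    have lim: "((\<lambda>w. G w v) \<longlongrightarrow> G y0 v) (at_left y0)" by simp
    have "\<forall>\<^sub>F w in at_left y0. w \<in> {y0 - \<delta><..<y0}"
      using \<delta> by (intro eventually_at_left_real) simp
    hence "\<forall>\<^sub>F w in at_left y0. G y0 z0 - e/2 \<le> G w v"
    proof (rule eventually_mono)
      fix w assume "w \<in> {y0 - \<delta><..<y0}"
      hence "w < y0" "\<bar>w - y0\<bar> < \<delta>" by auto
      from left[OF this that(2)] show "G y0 z0 - e/2 \<le> G w v" by linarith
    qed
    from tendsto_lowerbound[OF lim this] have "G y0 z0 - e/2 \<le> G y0 v" by simp
    thus ?thesis using equal e by simp
  qed
  thus ?thesis using \<delta> by blast
qed


lemma ga_liminf:
  fixes G :: "real \<Rightarrow> real ^ 'd \<Rightarrow> real"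
  assumes LC: "\<And>y0 z0. ((\<lambda>(y, z). G y z) \<longlongrightarrow> G y0 z0) (at (y0, z0) within {..<y0} \<times> UNIV)"
    and RL: "Liminf (at (y0, z0) within {y0<..} \<times> UNIV) (\<lambda>(y, z). ereal (G y z)) \<ge> ereal (G y0 z0)"
    and B: "\<And>u v. \<bar>G u v\<bar> \<le> \<phi> + C * (\<bar>u\<bar> + norm v powr \<alpha>)"
    and C: "C > 0" and \<alpha>: "0 < \<alpha>" "\<alpha> \<le> 1"
    and yy: "yy \<longlonglongrightarrow> y0" and zz: "zz \<longlonglongrightarrow> z0" and e: "e > 0"
  shows "\<forall>\<^sub>F n in sequentially. ereal (G y0 z0 - e) \<le> ga C \<alpha> G n (yy n) (zz n)"
proof -
  obtain \<delta> where \<delta>: "\<delta> > 0" and lc: "\<And>u v. \<bar>u - y0\<bar> < \<delta> \<Longrightarrow> norm (v - z0) < \<delta> \<Longrightarrow> G y0 z0 - e < G u v"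
    using lsc[OF LC RL e] by blast
  define m where "m = min (\<delta>/2) ((\<delta>/2) powr \<alpha>)"
  have m: "m > 0" using \<delta> by (simp add: m_def)
  define A where "A = \<phi> + C * (\<bar>y0\<bar> + 1 + (norm z0 + 1) powr \<alpha>) + \<bar>G y0 z0\<bar>"
  obtain N :: nat where N0: "max (A / (C * m) + 1) 1 \<le> real N" by (meson real_arch_simple)
  hence N: "A / (C * m) + 1 \<le> real N" and N1: "1 \<le> real N" by auto
  have e1: "\<forall>\<^sub>F n in sequentially. dist (yy n) y0 < min (\<delta>/2) 1"
  proof -
    have "min (\<delta>/2) 1 > 0" using \<delta> by simp
    thus ?thesis using yy unfolding tendsto_iff by blast
  qed
  have e2: "\<forall>\<^sub>F n in sequentially. dist (zz n) z0 < min (\<delta>/2) 1"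
  proof -
    have "min (\<delta>/2) 1 > 0" using \<delta> by simp
    thus ?thesis using zz unfolding tendsto_iff by blast
  qed
  have e3: "\<forall>\<^sub>F n in sequentially. N \<le> n" by (rule eventually_ge_at_top)
  show ?thesis using e1 e2 e3
  proof eventually_elim
    case (elim n)
    have yn: "\<bar>yy n - y0\<bar> < \<delta>/2" "\<bar>yy n - y0\<bar> < 1" using elim(1) by (auto simp: dist_real_def)
    have zn: "norm (zz n - z0) < \<delta>/2" "norm (zz n - z0) < 1" using elim(2) by (auto simp: dist_norm)
    have nN: "real N \<le> real n" using elim(3) by simp
    have An: "A \<le> (real n - 1) * (C * m)"
    proof -
      have "A / (C * m) \<le> real n - 1" using N nN by linarith
      hence "A / (C * m) * (C * m) \<le> (real n - 1) * (C * m)"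
        using C m by (intro mult_right_mono) auto
      thus ?thesis using C m by simp
    qed
    have n1: "real n - 1 \<ge> 0"
      using N1 nN by linarith
    show ?case unfolding ga_def
    proof (rule INF_greatest)
      fix uv :: "real \<times> (real ^ 'd)" assume "uv \<in> Qset"
      obtain u v where uvd: "uv = (u, v)" by fastforce
      let ?p = "\<bar>yy n - u\<bar> + norm (zz n - v) powr \<alpha>"
      have "G y0 z0 - e \<le> G u v + real n * C * ?p"
      proof (cases "\<bar>u - y0\<bar> < \<delta> \<and> norm (v - z0) < \<delta>")
        case True
        hence "G y0 z0 - e < G u v" using lc by blast
        moreover have "real n * C * ?p \<ge> 0" using C by simp
        ultimately show ?thesis by linarith
      next
        case False
        have pm: "m \<le> ?p"
        proof (cases "\<bar>u - y0\<bar> < \<delta>")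
          case False
          hence "\<delta>/2 \<le> \<bar>yy n - u\<bar>" using yn by linarith
          moreover have "m \<le> \<delta>/2" by (simp add: m_def)
          moreover have "norm (zz n - v) powr \<alpha> \<ge> 0" by simp
          ultimately show ?thesis by linarith
        next
          case True
          with \<open>\<not> (\<bar>u - y0\<bar> < \<delta> \<and> norm (v - z0) < \<delta>)\<close> have "norm (v - z0) \<ge> \<delta>" by simp
          moreover have "norm (v - z0) \<le> norm (v - zz n) + norm (zz n - z0)" by (rule norm_diff_triangle_le[of _ "zz n"]) simp_all
          ultimately have "\<delta>/2 \<le> norm (zz n - v)" using zn by (simp add: norm_minus_commute)
          hence "(\<delta>/2) powr \<alpha> \<le> norm (zz n - v) powr \<alpha>" using \<delta> \<alpha> by (intro powr_mono2) auto
          thus ?thesis unfolding m_def by simp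
        qed
        have tl: "G u v + real n * C * ?p \<ge> -(\<phi> + C * (\<bar>yy n\<bar> + norm (zz n) powr \<alpha>)) + (real n - 1) * C * ?p"
          by (rule term_lb[where G=G, OF B C \<alpha>])
        have "norm (zz n) \<le> norm z0 + 1" using zn norm_triangle_sub[of "zz n" z0] by linarith
        hence "norm (zz n) powr \<alpha> \<le> (norm z0 + 1) powr \<alpha>" using \<alpha> by (intro powr_mono2) auto
        moreover have "\<bar>yy n\<bar> \<le> \<bar>y0\<bar> + 1" using yn by linarith
        ultimately have "C * (\<bar>yy n\<bar> + norm (zz n) powr \<alpha>) \<le> C * (\<bar>y0\<bar> + 1 + (norm z0 + 1) powr \<alpha>)"
          using C by (intro mult_left_mono) auto
        moreover have "(real n - 1) * C * m \<le> (real n - 1) * C * ?p"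
          using pm n1 C by (intro mult_left_mono) auto
        moreover have "(real n - 1) * C * m = (real n - 1) * (C * m)" by simp
        moreover have "G y0 z0 \<le> \<bar>G y0 z0\<bar>" by simp
        ultimately show ?thesis using tl An e unfolding A_def by linarith
      qed
      thus "ereal (G y0 z0 - e) \<le> ereal (G (fst uv) (snd uv) + real n * C * (\<bar>yy n - fst uv\<bar> + norm (zz n - snd uv) powr \<alpha>))"
        using uvd by simp
    qed
  qed
qed


lemma ga_conv:
  fixes G :: "real \<Rightarrow> real ^ 'd \<Rightarrow> real"
  assumes LC: "\<And>y0 z0. ((\<lambda>(y, z). G y z) \<longlongrightarrow> G y0 z0) (at (y0, z0) within {..<y0} \<times> UNIV)"
    and RL: "Liminf (at (y0, z0) within {y0<..} \<times> UNIV) (\<lambda>(y, z). ereal (G y z)) \<ge> ereal (G y0 z0)"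
    and B: "\<And>u v. \<bar>G u v\<bar> \<le> \<phi> + C * (\<bar>u\<bar> + norm v powr \<alpha>)"
    and C: "C > 0" and \<alpha>: "0 < \<alpha>" "\<alpha> \<le> 1"
    and less: "\<And>n. yy n < y0" and yy: "yy \<longlonglongrightarrow> y0" and zz: "zz \<longlonglongrightarrow> z0"
  shows "(\<lambda>n. ga C \<alpha> G n (yy n) (zz n)) \<longlonglongrightarrow> ereal (G y0 z0)"
proof (rule order_tendstoI)
  fix a assume "a < ereal (G y0 z0)"
  then obtain r where r: "a < ereal r" "ereal r < ereal (G y0 z0)" using ereal_dense2 by blast
  hence "G y0 z0 - r > 0" by simp
  from ga_liminf[OF LC RL B C \<alpha> yy zz this]
  show "\<forall>\<^sub>F n in sequentially. a < ga C \<alpha> G n (yy n) (zz n)"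
    by eventually_elim (use r in simp)
next
  fix a assume a: "ereal (G y0 z0) < a"
  have "filterlim (\<lambda>n. (yy n, zz n)) (at (y0, z0) within {..<y0} \<times> UNIV) sequentially"
    unfolding filterlim_at using less by (auto intro!: tendsto_Pair yy zz always_eventually simp: less_imp_neq)
  from filterlim_compose[OF LC this] have "(\<lambda>n. G (yy n) (zz n)) \<longlonglongrightarrow> G y0 z0" by simp
  hence "(\<lambda>n. ereal (G (yy n) (zz n))) \<longlonglongrightarrow> ereal (G y0 z0)" by (simp add: tendsto_ereal)
  from order_tendstoD(2)[OF this a]
  show "\<forall>\<^sub>F n in sequentially. ga C \<alpha> G n (yy n) (zz n) < a"
  proof eventually_elim
    case (elim n)
    have "ga C \<alpha> G n (yy n) (zz n) \<le> ereal (G (yy n) (zz n))" by (rule ga_upper[OF LC \<alpha>(1)])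
    with elim show ?case by simp
  qed
qed


theorem proposition2:
  fixes M :: "'a measure" and F :: "real \<Rightarrow> 'a measure" and T :: real
    and g :: "'a \<Rightarrow> real \<Rightarrow> real \<Rightarrow> real ^ 'd \<Rightarrow> real"
    and f :: "'a \<Rightarrow> real \<Rightarrow> real" and C \<alpha> :: real
  assumes "prob_space M" and "complete_space_measure M" and "T > 0"
    and "filtration_on M T F"
    \<comment> \<open>g is a generator\<close>
    and gen: "\<And>y z. progressive T F (\<lambda>\<omega> t. g \<omega> t y z)"
    \<comment> \<open>(H1a)\<close>
    and H1a: "AE \<omega>t in M \<Otimes>\<^sub>M time_interval T.
       \<forall>y0 z0. ((\<lambda>(y, z). g (fst \<omega>t) (snd \<omega>t) y z) \<longlongrightarrow> g (fst \<omega>t) (snd \<omega>t) y0 z0)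
                   (at (y0, z0) within {..<y0} \<times> UNIV)
             \<and> Liminf (at (y0, z0) within {y0<..} \<times> UNIV)
                   (\<lambda>(y, z). ereal (g (fst \<omega>t) (snd \<omega>t) y z))
                 \<ge> ereal (g (fst \<omega>t) (snd \<omega>t) y0 z0)"
    \<comment> \<open>(H5)\<close>
    and C: "C > 0" and \<alpha>: "0 < \<alpha>" "\<alpha> < 1"
    and f_nonneg: "\<And>\<omega> t. f \<omega> t \<ge> 0"
    and f_prog: "progressive T F f"
    and f_int: "integrable (M \<Otimes>\<^sub>M time_interval T) (\<lambda>(\<omega>, t). f \<omega> t)"
    and H5: "AE \<omega>t in M \<Otimes>\<^sub>M time_interval T.
       \<forall>y z. \<bar>g (fst \<omega>t) (snd \<omega>t) y z\<bar>
               \<le> f (fst \<omega>t) (snd \<omega>t) + C * (\<bar>y\<bar> + norm z powr \<alpha>)"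
  shows
    \<comment> \<open>(i)\<close>
    "(\<forall>n\<ge>1. (AE \<omega>t in M \<Otimes>\<^sub>M time_interval T.
                 \<forall>y z. gen_approx C \<alpha> g n (fst \<omega>t) (snd \<omega>t) y z \<noteq> \<infinity>
                     \<and> gen_approx C \<alpha> g n (fst \<omega>t) (snd \<omega>t) y z \<noteq> -\<infinity>)
             \<and> (\<forall>y z. progressive T F (\<lambda>\<omega> t. gen_approx C \<alpha> g n \<omega> t y z)))
     \<comment> \<open>(ii)\<close>
     \<and> (\<forall>n\<ge>1. \<forall>y z. AE \<omega>t in M \<Otimes>\<^sub>M time_interval T.
             gen_approx C \<alpha> g n (fst \<omega>t) (snd \<omega>t) y z
               \<le> gen_approx C \<alpha> g (Suc n) (fst \<omega>t) (snd \<omega>t) y z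
           \<and> gen_approx C \<alpha> g (Suc n) (fst \<omega>t) (snd \<omega>t) y z \<le> ereal (g (fst \<omega>t) (snd \<omega>t) y z)
           \<and> \<bar>gen_approx C \<alpha> g n (fst \<omega>t) (snd \<omega>t) y z\<bar>
               \<le> ereal (f (fst \<omega>t) (snd \<omega>t) + C * (\<bar>y\<bar> + norm z powr \<alpha>)))
     \<comment> \<open>(iii)\<close>
     \<and> (\<forall>n\<ge>1. \<forall>y1 y2 z1 z2. AE \<omega>t in M \<Otimes>\<^sub>M time_interval T.
             \<bar>gen_approx C \<alpha> g n (fst \<omega>t) (snd \<omega>t) y1 z1
                - gen_approx C \<alpha> g n (fst \<omega>t) (snd \<omega>t) y2 z2\<bar>
               \<le> ereal (real n * C * (\<bar>y1 - y2\<bar> + norm (z1 - z2) powr \<alpha>)))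
     \<comment> \<open>(iv)\<close>
     \<and> (\<forall>(yy :: nat \<Rightarrow> real) (zz :: nat \<Rightarrow> real ^ 'd) y0 z0.
           (\<forall>n. yy n < y0) \<and> yy \<longlonglongrightarrow> y0 \<and> zz \<longlonglongrightarrow> z0 \<longrightarrow>
           (AE \<omega>t in M \<Otimes>\<^sub>M time_interval T.
              (\<lambda>n. gen_approx C \<alpha> g n (fst \<omega>t) (snd \<omega>t) (yy n) (zz n))
                \<longlonglongrightarrow> ereal (g (fst \<omega>t) (snd \<omega>t) y0 z0)))"
  proof -
  have \<alpha>1: "\<alpha> \<le> 1" using \<alpha> by simp
  have eq: "gen_approx C \<alpha> g n \<omega> t y z = ga C \<alpha> (g \<omega> t) n y z" for n \<omega> t y z
    by (simp add: gen_approx_def ga_def Qset_def)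
  let ?P = "\<lambda>\<omega>t. (\<forall>y0 z0. ((\<lambda>(y, z). g (fst \<omega>t) (snd \<omega>t) y z) \<longlongrightarrow> g (fst \<omega>t) (snd \<omega>t) y0 z0)
                   (at (y0, z0) within {..<y0} \<times> UNIV)
             \<and> Liminf (at (y0, z0) within {y0<..} \<times> UNIV)
                   (\<lambda>(y, z). ereal (g (fst \<omega>t) (snd \<omega>t) y z))
                 \<ge> ereal (g (fst \<omega>t) (snd \<omega>t) y0 z0))
       \<and> (\<forall>y z. \<bar>g (fst \<omega>t) (snd \<omega>t) y z\<bar>
               \<le> f (fst \<omega>t) (snd \<omega>t) + C * (\<bar>y\<bar> + norm z powr \<alpha>))"
  have good: "AE \<omega>t in M \<Otimes>\<^sub>M time_interval T. ?P \<omega>t"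
    using H1a H5 by eventually_elim auto
  have fin: "ga C \<alpha> (g (fst \<omega>t) (snd \<omega>t)) n y z
      = ereal (real_of_ereal (ga C \<alpha> (g (fst \<omega>t) (snd \<omega>t)) n y z))"
    and lb: "ereal (-(f (fst \<omega>t) (snd \<omega>t) + C * (\<bar>y\<bar> + norm z powr \<alpha>))) \<le> ga C \<alpha> (g (fst \<omega>t) (snd \<omega>t)) n y z"
    if "?P \<omega>t" "n \<ge> 1" for \<omega>t n y z
  proof -
    show lb: "ereal (-(f (fst \<omega>t) (snd \<omega>t) + C * (\<bar>y\<bar> + norm z powr \<alpha>))) \<le> ga C \<alpha> (g (fst \<omega>t) (snd \<omega>t)) n y z"
      using that by (intro ga_lower[OF _ C \<alpha>(1) \<alpha>1]) auto
    show "ga C \<alpha> (g (fst \<omega>t) (snd \<omega>t)) n y z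
      = ereal (real_of_ereal (ga C \<alpha> (g (fst \<omega>t) (snd \<omega>t)) n y z))"
      using lb ga_not_inf[of C \<alpha> "g (fst \<omega>t) (snd \<omega>t)" n y z]
      by (cases "ga C \<alpha> (g (fst \<omega>t) (snd \<omega>t)) n y z") auto
  qed
  have up: "ga C \<alpha> (g (fst \<omega>t) (snd \<omega>t)) n y z \<le> ereal (g (fst \<omega>t) (snd \<omega>t) y z)"
    if "?P \<omega>t" for \<omega>t n y z
    using that by (intro ga_upper[OF _ \<alpha>(1)]) auto
  have part1: "\<forall>n\<ge>1. (AE \<omega>t in M \<Otimes>\<^sub>M time_interval T.
                 \<forall>y z. gen_approx C \<alpha> g n (fst \<omega>t) (snd \<omega>t) y z \<noteq> \<infinity>
                     \<and> gen_approx C \<alpha> g n (fst \<omega>t) (snd \<omega>t) y z \<noteq> -\<infinity>)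
             \<and> (\<forall>y z. progressive T F (\<lambda>\<omega> t. gen_approx C \<alpha> g n \<omega> t y z))"
  proof (intro allI impI, rule conjI)
    fix n :: nat assume n: "n \<ge> 1"
    show "AE \<omega>t in M \<Otimes>\<^sub>M time_interval T.
                 \<forall>y z. gen_approx C \<alpha> g n (fst \<omega>t) (snd \<omega>t) y z \<noteq> \<infinity>
                     \<and> gen_approx C \<alpha> g n (fst \<omega>t) (snd \<omega>t) y z \<noteq> -\<infinity>"
      using good
    proof eventually_elim
      case (elim \<omega>t)
      show ?case unfolding eq
      proof (intro allI conjI)
        fix y z
        show "ga C \<alpha> (g (fst \<omega>t) (snd \<omega>t)) n y z \<noteq> \<infinity>" by (rule ga_not_inf)
        show "ga C \<alpha> (g (fst \<omega>t) (snd \<omega>t)) n y z \<noteq> -\<infinity>"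
          using fin[OF elim n, of y z] by (metis MInfty_neq_ereal(1))
      qed
    qed
    show "\<forall>y z. progressive T F (\<lambda>\<omega> t. gen_approx C \<alpha> g n \<omega> t y z)"
      unfolding progressive_def
    proof (intro allI ballI)
      fix y z t assume t: "t \<in> {0..T}"
      have m: "(\<lambda>x. g (fst x) (snd x) (fst uv) (snd uv)) \<in> borel_measurable (F t \<Otimes>\<^sub>M restrict_space lborel {0..t})"
        for uv :: "real \<times> (real ^ 'd)"
        using gen[of "fst uv" "snd uv"] t unfolding progressive_def by (simp add: case_prod_unfold)
      have "(\<lambda>x. INF uv\<in>Qset. ereal (g (fst x) (snd x) (fst uv) (snd uv)
               + real n * C * (\<bar>y - fst uv\<bar> + norm (z - snd uv) powr \<alpha>)))
          \<in> borel_measurable (F t \<Otimes>\<^sub>M restrict_space lborel {0..t})"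
        by (intro borel_measurable_INF countable_Qset borel_measurable_ereal borel_measurable_add m borel_measurable_const)
      thus "(\<lambda>(\<omega>, s). gen_approx C \<alpha> g n \<omega> s y z) \<in> borel_measurable (F t \<Otimes>\<^sub>M restrict_space lborel {0..t})"
        by (simp add: eq ga_def case_prod_unfold)
    qed
  qed
  have part2: "\<forall>n\<ge>1. \<forall>y z. AE \<omega>t in M \<Otimes>\<^sub>M time_interval T.
             gen_approx C \<alpha> g n (fst \<omega>t) (snd \<omega>t) y z
               \<le> gen_approx C \<alpha> g (Suc n) (fst \<omega>t) (snd \<omega>t) y z
           \<and> gen_approx C \<alpha> g (Suc n) (fst \<omega>t) (snd \<omega>t) y z \<le> ereal (g (fst \<omega>t) (snd \<omega>t) y z)
           \<and> \<bar>gen_approx C \<alpha> g n (fst \<omega>t) (snd \<omega>t) y z\<bar>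
               \<le> ereal (f (fst \<omega>t) (snd \<omega>t) + C * (\<bar>y\<bar> + norm z powr \<alpha>))"
  proof (intro allI impI)
    fix n :: nat and y z assume n: "n \<ge> 1"
    show "AE \<omega>t in M \<Otimes>\<^sub>M time_interval T.
             gen_approx C \<alpha> g n (fst \<omega>t) (snd \<omega>t) y z
               \<le> gen_approx C \<alpha> g (Suc n) (fst \<omega>t) (snd \<omega>t) y z
           \<and> gen_approx C \<alpha> g (Suc n) (fst \<omega>t) (snd \<omega>t) y z \<le> ereal (g (fst \<omega>t) (snd \<omega>t) y z)
           \<and> \<bar>gen_approx C \<alpha> g n (fst \<omega>t) (snd \<omega>t) y z\<bar>
               \<le> ereal (f (fst \<omega>t) (snd \<omega>t) + C * (\<bar>y\<bar> + norm z powr \<alpha>))"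
      using good
    proof eventually_elim
      case (elim \<omega>t)
      define r where "r = real_of_ereal (ga C \<alpha> (g (fst \<omega>t) (snd \<omega>t)) n y z)"
      have r: "ga C \<alpha> (g (fst \<omega>t) (snd \<omega>t)) n y z = ereal r" using fin[OF elim n] r_def by simp
      have l: "-(f (fst \<omega>t) (snd \<omega>t) + C * (\<bar>y\<bar> + norm z powr \<alpha>)) \<le> r" using lb[OF elim n, of y z] r by simp
      have "r \<le> g (fst \<omega>t) (snd \<omega>t) y z" using up[OF elim, of n y z] r by simp
      moreover have "g (fst \<omega>t) (snd \<omega>t) y z \<le> f (fst \<omega>t) (snd \<omega>t) + C * (\<bar>y\<bar> + norm z powr \<alpha>)"
      proof -
        have "\<bar>g (fst \<omega>t) (snd \<omega>t) y z\<bar> \<le> f (fst \<omega>t) (snd \<omega>t) + C * (\<bar>y\<bar> + norm z powr \<alpha>)"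
          using elim by blast
        thus ?thesis by linarith
      qed
      ultimately have "\<bar>r\<bar> \<le> f (fst \<omega>t) (snd \<omega>t) + C * (\<bar>y\<bar> + norm z powr \<alpha>)" using l by linarith
      thus ?case unfolding eq using ga_mono[OF C, of \<alpha> "g (fst \<omega>t) (snd \<omega>t)" n y z] up[OF elim, of "Suc n" y z] r by simp
    qed
  qed
  have part3: "\<forall>n\<ge>1. \<forall>y1 y2 z1 z2. AE \<omega>t in M \<Otimes>\<^sub>M time_interval T.
             \<bar>gen_approx C \<alpha> g n (fst \<omega>t) (snd \<omega>t) y1 z1
                - gen_approx C \<alpha> g n (fst \<omega>t) (snd \<omega>t) y2 z2\<bar>
               \<le> ereal (real n * C * (\<bar>y1 - y2\<bar> + norm (z1 - z2) powr \<alpha>))"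
  proof (intro allI impI)
    fix n :: nat and y1 y2 z1 z2 assume n: "n \<ge> 1"
    show "AE \<omega>t in M \<Otimes>\<^sub>M time_interval T.
             \<bar>gen_approx C \<alpha> g n (fst \<omega>t) (snd \<omega>t) y1 z1
                - gen_approx C \<alpha> g n (fst \<omega>t) (snd \<omega>t) y2 z2\<bar>
               \<le> ereal (real n * C * (\<bar>y1 - y2\<bar> + norm (z1 - z2) powr \<alpha>))"
      using good
    proof eventually_elim
      case (elim \<omega>t)
      define r1 where "r1 = real_of_ereal (ga C \<alpha> (g (fst \<omega>t) (snd \<omega>t)) n y1 z1)"
      define r2 where "r2 = real_of_ereal (ga C \<alpha> (g (fst \<omega>t) (snd \<omega>t)) n y2 z2)"
      have r1: "ga C \<alpha> (g (fst \<omega>t) (snd \<omega>t)) n y1 z1 = ereal r1" using fin[OF elim n] r1_def by simp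
      have r2: "ga C \<alpha> (g (fst \<omega>t) (snd \<omega>t)) n y2 z2 = ereal r2" using fin[OF elim n] r2_def by simp
      have a: "r1 - r2 \<le> real n * C * (\<bar>y1 - y2\<bar> + norm (z1 - z2) powr \<alpha>)"
        by (rule ga_lip_half[OF C \<alpha>(1) \<alpha>1 r1 r2])
      have b: "r2 - r1 \<le> real n * C * (\<bar>y2 - y1\<bar> + norm (z2 - z1) powr \<alpha>)"
        by (rule ga_lip_half[OF C \<alpha>(1) \<alpha>1 r2 r1])
      have "\<bar>r1 - r2\<bar> \<le> real n * C * (\<bar>y1 - y2\<bar> + norm (z1 - z2) powr \<alpha>)"
        using a b by (simp add: abs_minus_commute norm_minus_commute)
      thus ?case unfolding eq r1 r2 by simp
    qed
  qed
  have part4: "\<forall>(yy :: nat \<Rightarrow> real) (zz :: nat \<Rightarrow> real ^ 'd) y0 z0.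
           (\<forall>n. yy n < y0) \<and> yy \<longlonglongrightarrow> y0 \<and> zz \<longlonglongrightarrow> z0 \<longrightarrow>
           (AE \<omega>t in M \<Otimes>\<^sub>M time_interval T.
              (\<lambda>n. gen_approx C \<alpha> g n (fst \<omega>t) (snd \<omega>t) (yy n) (zz n))
                \<longlonglongrightarrow> ereal (g (fst \<omega>t) (snd \<omega>t) y0 z0))"
  proof (intro allI impI)
    fix yy :: "nat \<Rightarrow> real" and zz :: "nat \<Rightarrow> real ^ 'd" and y0 z0
    assume h: "(\<forall>n. yy n < y0) \<and> yy \<longlonglongrightarrow> y0 \<and> zz \<longlonglongrightarrow> z0"
    show "AE \<omega>t in M \<Otimes>\<^sub>M time_interval T.
              (\<lambda>n. gen_approx C \<alpha> g n (fst \<omega>t) (snd \<omega>t) (yy n) (zz n))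
                \<longlonglongrightarrow> ereal (g (fst \<omega>t) (snd \<omega>t) y0 z0)"
      using good
    proof eventually_elim
      case (elim \<omega>t)
      show ?case unfolding eq
        using elim h by (intro ga_conv[OF _ _ _ C \<alpha>(1) \<alpha>1]) auto
    qed
  qed
  show ?thesis using part1 part2 part3 part4 by blast
qed

end
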